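(* Let $b\ge 2$ and $m\ge 0$ be integers. Consider the following nondeterministic procedure. Set $\mathcal U_1=[0,1)^2$. For $n=1,2,\ldots$: if $\mathcal U_n=\emptyset$, stop; otherwise choose an arbitrary box $X_n=\prod_{j=1}^2\left[\frac{u_j(n)}{b^m},\frac{u_j(n)+1}{b^m}\right)\subseteq \mathcal U_n$ with $u_j(n)\in\{0,1,\ldots,b^m-1\}$, and set $\mathcal U_{n+1}=\mathcal U_n\setminus\bigcup_{E\in\mathcal E_m(X_n)}E$. If a run of this procedure stops after exactly $b^m$ boxes $X_1,\ldots,X_{b^m}$ have been chosen, then these boxes constitute a $(0,m,2)$-net in base $b$, i.e., every elementary $b$-adic interval of volume $b^{-m}$ in $[0,1)^2$ contains exactly one of $X_1,\ldots,X_{b^m}$ (equivalently, for any choice of points $\boldsymbol x_n\in X_n$, the set $\{\boldsymbol x_1,\ldots,\boldsymbol x_{b^m}\}$ is a $(0,m,2)$-net in base $b$).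
   Context: An elementary $b$-adic interval in $[0,1)^s$ is a set $\prod_{j=1}^s\left[\frac{a_j}{b^{d_j}},\frac{a_j+1}{b^{d_j}}\right)$ with $d_j\in\mathbb N_0$ and $a_j\in\{0,1,\ldots,b^{d_j}-1\}$; its volume is $b^{-(d_1+\cdots+d_s)}$. For a box $X=\prod_{j=1}^s\left[\frac{u_j}{b^m},\frac{u_j+1}{b^m}\right)$, $\mathcal E_m(X)$ denotes the set of all elementary $b$-adic intervals of volume $b^{-m}$ that contain $X$ as a subset. For integers $0\le t\le m$, a $b^m$-element point set $\mathcal P$ in $[0,1)^s$ is a $(t,m,s)$-net in base $b$ if every elementary $b$-adic interval of volume $b^{t-m}$ contains exactly $b^t$ points of $\mathcal P$. *)

theory Defs
  imports Main Complex_Main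
begin

definition badic :: "nat \<Rightarrow> nat \<Rightarrow> nat \<Rightarrow> real set" where
  "badic b d a = {x. real a / real b ^ d \<le> x \<and> x < (real a + 1) / real b ^ d}"

definition elem_int2 :: "nat \<Rightarrow> nat \<Rightarrow> (real \<times> real) set set" where
  "elem_int2 b k = {badic b d1 a1 \<times> badic b d2 a2 | d1 d2 a1 a2.
       d1 + d2 = k \<and> a1 < b ^ d1 \<and> a2 < b ^ d2}"

definition box2 :: "nat \<Rightarrow> nat \<Rightarrow> nat \<times> nat \<Rightarrow> (real \<times> real) set" where
  "box2 b m u = badic b m (fst u) \<times> badic b m (snd u)"

definition Em :: "nat \<Rightarrow> nat \<Rightarrow> (real \<times> real) set \<Rightarrow> (real \<times> real) set set" where
  "Em b m X = {E \<in> elem_int2 b m. X \<subseteq> E}"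

definition unit_square :: "(real \<times> real) set" where
  "unit_square = {0..<1} \<times> {0..<1}"

definition tms_net2 :: "nat \<Rightarrow> nat \<Rightarrow> nat \<Rightarrow> (real \<times> real) set \<Rightarrow> bool" where
  "tms_net2 b t m P \<longleftrightarrow> t \<le> m \<and> P \<subseteq> unit_square \<and> finite P \<and> card P = b ^ m \<and>
     (\<forall>E \<in> elem_int2 b (m - t). card (P \<inter> E) = b ^ t)"

definition run_stops_after :: "nat \<Rightarrow> nat \<Rightarrow> (nat \<Rightarrow> (real \<times> real) set) \<Rightarrow>
    (nat \<Rightarrow> nat \<times> nat) \<Rightarrow> nat \<Rightarrow> bool" where
  "run_stops_after b m U u N \<longleftrightarrow>
     U 1 = unit_square \<and>
     (\<forall>n \<in> {1..N}. U n \<noteq> {} \<and> fst (u n) < b ^ m \<and> snd (u n) < b ^ m \<and>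
        box2 b m (u n) \<subseteq> U n \<and>
        U (Suc n) = U n - \<Union> (Em b m (box2 b m (u n)))) \<and>
     U (Suc N) = {}"

end

theory Submission
  imports Defs
begin

lemma badic_floor:
  assumes "b > 0"
  shows "x \<in> badic b k c \<longleftrightarrow> \<lfloor>x * real b ^ k\<rfloor> = int c"
proof -
  have p: "real b ^ k > 0" using assms by simp
  show ?thesis unfolding badic_def floor_eq_iff
    using p by (simp add: pos_divide_le_eq pos_less_divide_eq)
qed

lemma floor_level:
  assumes "b > 0" "d \<le> m"
  shows "\<lfloor>x * real b ^ d\<rfloor> = \<lfloor>x * real b ^ m\<rfloor> div int (b ^ (m - d))"
proof -
  have e: "real b ^ m = real b ^ d * real b ^ (m - d)"
    using assms(2) by (simp add: power_add[symmetric])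
  hence "x * real b ^ d = (x * real b ^ m) / real_of_int (int (b ^ (m - d)))"
    using assms(1) e by (simp add: field_simps)
  thus ?thesis using floor_divide_real_eq_div[of "int (b ^ (m - d))" "x * real b ^ m"] by simp
qed

lemma badic_level:
  assumes "b > 0" "d \<le> m" "x \<in> badic b m a"
  shows "x \<in> badic b d c \<longleftrightarrow> c = a div b ^ (m - d)"
proof -
  have "\<lfloor>x * real b ^ m\<rfloor> = int a" using assms badic_floor by blast
  hence "\<lfloor>x * real b ^ d\<rfloor> = int (a div b ^ (m - d))"
    using floor_level[OF assms(1,2)] by (simp add: zdiv_int)
  thus ?thesis using badic_floor[OF assms(1)] by auto
qed

lemma badic_corner: "b > 0 \<Longrightarrow> real a / real b ^ m \<in> badic b m a"
  unfolding badic_def by (simp add: divide_strict_right_mono)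


lemma box_in:
  assumes "b > 0" "d \<le> m" "p \<in> box2 b m v"
  shows "p \<in> badic b d a1 \<times> badic b (m - d) a2 \<longleftrightarrow> a1 = fst v div b ^ (m - d) \<and> a2 = snd v div b ^ d"
proof -
  obtain p1 p2 where pp: "p = (p1, p2)" by force
  have 1: "p1 \<in> badic b m (fst v)" "p2 \<in> badic b m (snd v)" using assms(3) pp by (auto simp: box2_def)
  have "m - d \<le> m" by simp
  have "m - (m - d) = d" using assms(2) by simp
  thus ?thesis using pp badic_level[OF assms(1) assms(2) 1(1)] badic_level[OF assms(1) \<open>m - d \<le> m\<close> 1(2)]
    by auto
qed

lemma box_corner: "b > 0 \<Longrightarrow> (real (fst v) / real b ^ m, real (snd v) / real b ^ m) \<in> box2 b m v"
  by (simp add: box2_def badic_corner)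

lemma box_sub:
  assumes "b > 0" "d \<le> m"
  shows "box2 b m v \<subseteq> badic b d a1 \<times> badic b (m - d) a2 \<longleftrightarrow> a1 = fst v div b ^ (m - d) \<and> a2 = snd v div b ^ d"
  using box_in[OF assms] box_corner[OF assms(1), of v] by blast

lemma one_of_sum:
  fixes f :: "'a \<Rightarrow> nat"
  assumes fin: "finite T" and le: "\<forall>t\<in>T. f t \<le> 1" and eq: "sum f T = card T" and tT: "t \<in> T"
  shows "f t = 1"
proof (rule ccontr)
  assume ne: "f t \<noteq> 1"
  have "f t \<le> 1" using le tT by blast
  hence f0: "f t = 0" using ne by linarith
  have "sum f T = f t + sum f (T - {t})" using fin tT by (rule sum.remove)
  also have "\<dots> = sum f (T - {t})" using f0 by simp
  also have "\<dots> \<le> sum (\<lambda>_. 1) (T - {t})" by (rule sum_mono) (use le in blast)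
  also have "\<dots> = card (T - {t})" by simp
  also have "\<dots> = card T - 1" using fin tT by simp
  finally have "sum f T \<le> card T - 1" .
  moreover have "card T > 0" using fin tT card_gt_0_iff by blast
  ultimately show False using eq by linarith
qed

theorem mainTheorem3:
  fixes b m :: nat
    and U :: "nat \<Rightarrow> (real \<times> real) set"
    and u :: "nat \<Rightarrow> nat \<times> nat"
  assumes "b \<ge> 2"
    and "run_stops_after b m U u (b ^ m)"
  shows "(\<forall>E \<in> elem_int2 b m. card {n \<in> {1..b ^ m}. box2 b m (u n) \<subseteq> E} = 1)
       \<and> (\<forall>x :: nat \<Rightarrow> real \<times> real. (\<forall>n \<in> {1..b ^ m}. x n \<in> box2 b m (u n)) \<longrightarrow>
            tms_net2 b 0 m (x ` {1..b ^ m}))"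
proof -
  define N where "N = b ^ m"
  define I where "I = {1..N}"
  define X where "X n = box2 b m (u n)" for n
  have b0: "b > 0" using assms(1) by simp
  have run: "\<forall>n \<in> I. U n \<noteq> {} \<and> fst (u n) < b ^ m \<and> snd (u n) < b ^ m \<and>
        X n \<subseteq> U n \<and> U (Suc n) = U n - \<Union> (Em b m (X n))"
    using assms(2) unfolding run_stops_after_def I_def N_def X_def by blast
  have ub1: "fst (u n) < b ^ m" and ub2: "snd (u n) < b ^ m" and XU: "X n \<subseteq> U n"
    and Ust: "U (Suc n) = U n - \<Union> (Em b m (X n))" if "n \<in> I" for n
    using bspec[OF run that] by blast+
  have mono: "U (Suc i + k) \<subseteq> U (Suc i)" if "Suc i + k \<le> N" for i k
    using that
  proof (induction k)
    case 0 then show ?case by simp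
  next
    case (Suc k)
    have "Suc i + k \<in> I" using Suc.prems by (simp add: I_def)
    hence "U (Suc (Suc i + k)) \<subseteq> U (Suc i + k)" using Ust by blast
    thus ?case using Suc by simp
  qed
  have Xne: "X n \<noteq> {}" for n using box_corner[OF b0] unfolding X_def by blast
  have atmost: "i = j" if E: "E \<in> elem_int2 b m" and ij: "i \<in> I" "j \<in> I" "X i \<subseteq> E" "X j \<subseteq> E" for E i j
  proof -
    have key: False if p: "i' \<in> I" "j' \<in> I" "i' < j'" "X i' \<subseteq> E" "X j' \<subseteq> E" for i' j'
    proof -
      have "E \<in> Em b m (X i')" using E p by (simp add: Em_def)
      hence "U (Suc i') \<inter> E = {}" using Ust[OF p(1)] by blast
      obtain k where k: "j' = Suc i' + k" using p(3) less_iff_Suc_add by auto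
      have "U j' \<subseteq> U (Suc i')" using mono[of i' k] k p(2) by (simp add: I_def)
      hence "X j' \<subseteq> U (Suc i') \<inter> E" using XU[OF p(2)] p(5) by blast
      thus False using Xne `U (Suc i') \<inter> E = {}` by blast
    qed
    show ?thesis using key[of i j] key[of j i] ij by (metis linorder_neqE_nat)
  qed
  define T where "T = Sigma {..m} (\<lambda>d. {..<b ^ d} \<times> {..<b ^ (m - d)})"
  define F where "F t = (case t of (d, a1, a2) \<Rightarrow> badic b d a1 \<times> badic b (m - d) a2)" for t
  have finT: "finite T" unfolding T_def by simp
  have cardT: "card T = (m + 1) * N"
  proof -
    have "card T = (\<Sum>d\<le>m. card ({..<b ^ d} \<times> {..<b ^ (m - d)}))"
      unfolding T_def by (simp add: card_SigmaI)
    also have "\<dots> = (\<Sum>d\<le>m. N)"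
      by (rule sum.cong) (auto simp: card_cartesian_product N_def power_add[symmetric])
    finally show ?thesis by simp
  qed
  have FE: "F t \<in> elem_int2 b m" if "t \<in> T" for t
    using that unfolding T_def F_def elem_int2_def by force
  have EF: "\<exists>t\<in>T. E = F t" if EE: "E \<in> elem_int2 b m" for E
  proof -
    obtain d1 d2 a1 a2 where e: "E = badic b d1 a1 \<times> badic b d2 a2" "d1 + d2 = m" "a1 < b ^ d1" "a2 < b ^ d2"
      using EE unfolding elem_int2_def by blast
    have "(d1, a1, a2) \<in> T" using e unfolding T_def by auto
    moreover have "E = F (d1, a1, a2)" using e unfolding F_def by auto
    ultimately show ?thesis by blast
  qed
  have le1: "card {n \<in> I. X n \<subseteq> F t} \<le> 1" if "t \<in> T" for t
  proof -
    have "finite {n \<in> I. X n \<subseteq> F t}" by (simp add: I_def)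
    thus ?thesis using atmost[OF FE[OF that]] by (auto simp: card_le_Suc0_iff_eq)
  qed
  have cnt: "card {t \<in> T. X n \<subseteq> F t} = m + 1" if "n \<in> I" for n
  proof -
    define g where "g d = (d, fst (u n) div b ^ (m - d), snd (u n) div b ^ d)" for d
    have u1: "fst (u n) < b ^ m" "snd (u n) < b ^ m" using ub1 ub2 that by auto
    have "{t \<in> T. X n \<subseteq> F t} = g ` {..m}"
    proof (intro set_eqI iffI)
      fix t assume "t \<in> {t \<in> T. X n \<subseteq> F t}"
      then obtain d a1 a2 where t: "t = (d, a1, a2)" "d \<le> m" "X n \<subseteq> badic b d a1 \<times> badic b (m - d) a2"
        unfolding T_def F_def by auto
      thus "t \<in> g ` {..m}" using box_sub[OF b0 t(2)] unfolding X_def g_def by auto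
    next
      fix t assume "t \<in> g ` {..m}"
      then obtain d where d: "d \<le> m" "t = g d" by auto
      have "fst (u n) div b ^ (m - d) < b ^ d"
        using u1 d(1) b0 by (simp add: less_mult_imp_div_less power_add[symmetric])
      moreover have "snd (u n) div b ^ d < b ^ (m - d)"
        using u1 d(1) b0 less_mult_imp_div_less[of "snd (u n)" "b ^ (m - d)" "b ^ d"]
        by (simp add: power_add[symmetric])
      ultimately have "t \<in> T" using d unfolding T_def g_def by auto
      moreover have "X n \<subseteq> F t" using box_sub[OF b0 d(1)] d unfolding X_def F_def g_def by auto
      ultimately show "t \<in> {t \<in> T. X n \<subseteq> F t}" by simp
    qed
    moreover have "inj_on g {..m}" unfolding g_def inj_on_def by auto
    ultimately show ?thesis by (simp add: card_image)
  qed
  have dc: "(\<Sum>t\<in>T. card {n \<in> I. X n \<subseteq> F t}) = (\<Sum>n\<in>I. card {t \<in> T. X n \<subseteq> F t})"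
  proof -
    have "(\<Sum>t\<in>T. card {n \<in> I. X n \<subseteq> F t}) = (\<Sum>t\<in>T. \<Sum>n\<in>I. if X n \<subseteq> F t then 1 else 0)"
      by (rule sum.cong) (auto simp: I_def sum.If_cases Int_def)
    also have "\<dots> = (\<Sum>n\<in>I. \<Sum>t\<in>T. if X n \<subseteq> F t then 1 else 0)" by (rule sum.swap)
    also have "\<dots> = (\<Sum>n\<in>I. card {t \<in> T. X n \<subseteq> F t})"
      by (rule sum.cong) (auto simp: finT sum.If_cases Int_def)
    finally show ?thesis .
  qed
  have "(\<Sum>n\<in>I. card {t \<in> T. X n \<subseteq> F t}) = card T"
    using cnt cardT by (simp add: I_def)
  hence exact: "card {n \<in> I. X n \<subseteq> F t} = 1" if "t \<in> T" for t
    using one_of_sum[OF finT _ _ that, of "\<lambda>t. card {n \<in> I. X n \<subseteq> F t}"] le1 dc by auto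
  have part1: "\<forall>E \<in> elem_int2 b m. card {n \<in> I. X n \<subseteq> E} = 1"
    using EF exact by blast
  have part2: "tms_net2 b 0 m (x ` I)" if x: "\<forall>n \<in> I. x n \<in> X n" for x
  proof -
    have memF: "x n \<in> F t \<longleftrightarrow> X n \<subseteq> F t" if "n \<in> I" "t \<in> T" for n t
    proof -
      obtain d a1 a2 where t: "t = (d, a1, a2)" "d \<le> m" using `t \<in> T` unfolding T_def by auto
      show ?thesis using box_in[OF b0 t(2) x[rule_format, OF that(1), unfolded X_def]]
        box_sub[OF b0 t(2)] t unfolding F_def X_def by simp
    qed
    have inj: "inj_on x I"
    proof (rule inj_onI)
      fix i j assume ij: "i \<in> I" "j \<in> I" "x i = x j"
      define t where "t = (m, fst (u i), snd (u i) div b ^ m)"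
      have u1: "fst (u i) < b ^ m" "snd (u i) < b ^ m" using ub1 ub2 ij by auto
      have tT: "t \<in> T" using u1 unfolding T_def t_def by auto
      have "X i \<subseteq> F t" using box_sub[OF b0 order_refl[of m], of "u i"] unfolding X_def F_def t_def by simp
      moreover have "x i \<in> F t" using memF[OF ij(1) tT] calculation by simp
      hence "X j \<subseteq> F t" using memF[OF ij(2) tT] ij(3) by simp
      ultimately show "i = j" using atmost[OF FE[OF tT] ij(1,2)] by simp
    qed
    have sub: "x ` I \<subseteq> unit_square"
    proof
      fix p assume "p \<in> x ` I"
      then obtain n where n: "n \<in> I" "p = x n" by auto
      have u1: "fst (u n) < b ^ m" "snd (u n) < b ^ m" using ub1 ub2 n by auto
      have "p \<in> X n" using x n by simp
      then obtain p1 p2 where p: "p = (p1, p2)" "p1 \<in> badic b m (fst (u n))" "p2 \<in> badic b m (snd (u n))"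
        unfolding X_def box2_def by auto
      have "real b ^ m > 0" using b0 by simp
      have h: "0 \<le> y \<and> y < 1" if "y \<in> badic b m a" "a < b ^ m" for y a
      proof -
        have "real a + 1 \<le> real b ^ m" using that(2) by (metis of_nat_Suc of_nat_le_iff of_nat_power Suc_leI add.commute)
        hence "(real a + 1) / real b ^ m \<le> 1" using `real b ^ m > 0` by simp
        moreover have "0 \<le> real a / real b ^ m" by simp
        moreover have "real a / real b ^ m \<le> y \<and> y < (real a + 1) / real b ^ m"
          using that(1) unfolding badic_def by simp
        ultimately show ?thesis by linarith
      qed
      show "p \<in> unit_square" using h[OF p(2) u1(1)] h[OF p(3) u1(2)] p unfolding unit_square_def by auto
    qed
    have cardP: "card (x ` I) = b ^ m" using inj by (simp add: card_image I_def N_def)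
    have "card (x ` I \<inter> E) = 1" if E: "E \<in> elem_int2 b m" for E
    proof -
      obtain t where t: "t \<in> T" "E = F t" using EF[OF E] by blast
      have mt: "\<And>n. n \<in> I \<Longrightarrow> x n \<in> F t \<longleftrightarrow> X n \<subseteq> F t" using memF t(1) by blast
      have "x ` I \<inter> E = x ` {n \<in> I. X n \<subseteq> F t}" unfolding t(2) using mt by blast
      moreover have "inj_on x {n \<in> I. X n \<subseteq> F t}" using inj by (rule inj_on_subset) auto
      ultimately show ?thesis using exact[OF t(1)] by (simp add: card_image)
    qed
    thus ?thesis unfolding tms_net2_def using sub cardP by (simp add: I_def)
  qed
  show ?thesis
  proof (intro conjI ballI allI impI)
    fix E assume "E \<in> elem_int2 b m"
    thus "card {n \<in> {1..b ^ m}. box2 b m (u n) \<subseteq> E} = 1"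
      using part1 unfolding I_def N_def X_def by simp
  next
    fix x :: "nat \<Rightarrow> real \<times> real"
    assume "\<forall>n \<in> {1..b ^ m}. x n \<in> box2 b m (u n)"
    thus "tms_net2 b 0 m (x ` {1..b ^ m})"
      using part2[of x] unfolding I_def N_def X_def by simp
  qed
qed

end
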